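(* Suppose $\mathit{Act}$ is infinite. Then $\mathcal{E}_v'$ is complete for $\simeq_\omega$ over open monitors: for all monitors $m,n$, if $m\simeq_\omega n$ then $\mathcal{E}_v'\vdash m=n$.
   Context: Monitors: terms $m,n ::= v \mid a.m \mid m+n \mid x$ over an action set $\mathit{Act}$ and variables $x$, verdicts $v::=\mathit{end}\mid\mathit{yes}\mid\mathit{no}$; closed monitors contain no variables. Transitions $\xrightarrow{\alpha}$, $\alpha\in\mathit{Act}\cup\{\tau\}$ ($\tau\notin\mathit{Act}$): least relation with $a.m\xrightarrow{a}m$; $m\xrightarrow{\alpha}m'$ implies $m+n\xrightarrow{\alpha}m'$ and $n+m\xrightarrow{\alpha}m'$; $v\xrightarrow{\alpha}v$ for each verdict $v$. Weak transitions: $m\xRightarrow{\varepsilon}m'$ iff $m(\xrightarrow{\tau})^*m'$; $m\xRightarrow{a}m'$ iff $m\xRightarrow{\varepsilon}\xrightarrow{a}\xRightarrow{\varepsilon}m'$; $m\xRightarrow{as'}m'$ ($s'\neq\varepsilon$) iff $m\xRightarrow{a}m_1\xRightarrow{s'}m'$. For closed $m$: $L_a(m)=\{s\mid m\xRightarrow{s}\mathit{yes}\}$, $L_r(m)=\{s\mid m\xRightarrow{s}\mathit{no}\}$; closed $m\simeq_\omega n$ iff $L_a(m)\cdot\mathit{Act}^\omega=L_a(n)\cdot\mathit{Act}^\omega$ and $L_r(m)\cdot\mathit{Act}^\omega=L_r(n)\cdot\mathit{Act}^\omega$; for open monitors $m\simeq_\omega n$ iff $\sigma(m)\simeq_\omega\sigma(n)$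 for all closed substitutions $\sigma$. $\mathcal{E}\vdash m=n$ denotes derivability by the rules of equational logic. $\mathcal{E}_v'$ consists of (A1) $x+y=y+x$; (A2) $x+(y+z)=(x+y)+z$; (A3) $x+x=x$; (A4) $x+\mathit{end}=x$; for each $a\in\mathit{Act}$: ($E_a$) $a.\mathit{end}=\mathit{end}$; ($Y_a$) $\mathit{yes}=\mathit{yes}+a.\mathit{yes}$; ($N_a$) $\mathit{no}=\mathit{no}+a.\mathit{no}$; ($D_a$) $a.(x+y)=a.x+a.y$; and (O1) $\mathit{yes}+\mathit{no}=\mathit{yes}+\mathit{no}+x$. *)

theory Defs
  imports Main
begin

datatype ('a, 'x) mon =
    End | Yes | No
  | Pre 'a "('a, 'x) mon"
  | Sum "('a, 'x) mon" "('a, 'x) mon"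
  | Var 'x

fun is_verdict :: "('a, 'x) mon \<Rightarrow> bool" where
  "is_verdict End = True"
| "is_verdict Yes = True"
| "is_verdict No = True"
| "is_verdict _ = False"

fun vars :: "('a, 'x) mon \<Rightarrow> 'x set" where
  "vars (Pre a m) = vars m"
| "vars (Sum m n) = vars m \<union> vars n"
| "vars (Var x) = {x}"
| "vars _ = {}"

definition closed :: "('a, 'x) mon \<Rightarrow> bool" where
  "closed m \<longleftrightarrow> vars m = {}"

fun subst :: "('x \<Rightarrow> ('a, 'x) mon) \<Rightarrow> ('a, 'x) mon \<Rightarrow> ('a, 'x) mon" where
  "subst \<sigma> (Pre a m) = Pre a (subst \<sigma> m)"
| "subst \<sigma> (Sum m n) = Sum (subst \<sigma> m) (subst \<sigma> n)"
| "subst \<sigma> (Var x) = \<sigma> x"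
| "subst \<sigma> End = End"
| "subst \<sigma> Yes = Yes"
| "subst \<sigma> No = No"

text \<open>Labels: Some a is the action a, None is tau.\<close>
inductive step :: "('a, 'x) mon \<Rightarrow> 'a option \<Rightarrow> ('a, 'x) mon \<Rightarrow> bool" where
  step_pre: "step (Pre a m) (Some a) m"
| step_sumL: "step m \<alpha> m' \<Longrightarrow> step (Sum m n) \<alpha> m'"
| step_sumR: "step m \<alpha> m' \<Longrightarrow> step (Sum n m) \<alpha> m'"
| step_verd: "is_verdict v \<Longrightarrow> step v \<alpha> v"

definition tau_star :: "('a, 'x) mon \<Rightarrow> ('a, 'x) mon \<Rightarrow> bool" where
  "tau_star = (\<lambda>m m'. step m None m')\<^sup>*\<^sup>*"

inductive wtrace :: "('a, 'x) mon \<Rightarrow> 'a list \<Rightarrow> ('a, 'x) mon \<Rightarrow> bool" where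
  wt_eps: "tau_star m m' \<Longrightarrow> wtrace m [] m'"
| wt_cons: "tau_star m m1 \<Longrightarrow> step m1 (Some a) m2 \<Longrightarrow> tau_star m2 m3 \<Longrightarrow>
            (s = [] \<Longrightarrow> m' = m3) \<Longrightarrow> (s \<noteq> [] \<Longrightarrow> wtrace m3 s m') \<Longrightarrow>
            wtrace m (a # s) m'"

definition La :: "('a, 'x) mon \<Rightarrow> 'a list set" where
  "La m = {s. wtrace m s Yes}"

definition Lr :: "('a, 'x) mon \<Rightarrow> 'a list set" where
  "Lr m = {s. wtrace m s No}"

text \<open>L \<cdot> Act^omega, infinite words as functions nat \<Rightarrow> 'a.\<close>
definition omega_ext :: "'a list set \<Rightarrow> (nat \<Rightarrow> 'a) set" where
  "omega_ext L = {w. \<exists>s\<in>L. \<exists>w'. w = (\<lambda>i. if i < length s then s ! i else w' (i - length s))}"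

definition omega_eq_closed :: "('a, 'x) mon \<Rightarrow> ('a, 'x) mon \<Rightarrow> bool" where
  "omega_eq_closed m n \<longleftrightarrow>
     omega_ext (La m) = omega_ext (La n) \<and> omega_ext (Lr m) = omega_ext (Lr n)"

definition omega_eq :: "('a, 'x) mon \<Rightarrow> ('a, 'x) mon \<Rightarrow> bool" where
  "omega_eq m n \<longleftrightarrow>
     (\<forall>\<sigma>. (\<forall>x. closed (\<sigma> x)) \<longrightarrow> omega_eq_closed (subst \<sigma> m) (subst \<sigma> n))"

text \<open>Derivability in equational logic from E_v'. Axioms are given as schemas
  over arbitrary monitors (= all substitution instances of the axioms).\<close>
inductive Ev_derives :: "('a, 'x) mon \<Rightarrow> ('a, 'x) mon \<Rightarrow> bool" where
  A1: "Ev_derives (Sum x y) (Sum y x)"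
| A2: "Ev_derives (Sum x (Sum y z)) (Sum (Sum x y) z)"
| A3: "Ev_derives (Sum x x) x"
| A4: "Ev_derives (Sum x End) x"
| Ea: "Ev_derives (Pre a End) End"
| Ya: "Ev_derives Yes (Sum Yes (Pre a Yes))"
| Na: "Ev_derives No (Sum No (Pre a No))"
| Da: "Ev_derives (Pre a (Sum x y)) (Sum (Pre a x) (Pre a y))"
| O1: "Ev_derives (Sum Yes No) (Sum (Sum Yes No) x)"
| refl: "Ev_derives m m"
| sym: "Ev_derives m n \<Longrightarrow> Ev_derives n m"
| trans: "Ev_derives m n \<Longrightarrow> Ev_derives n k \<Longrightarrow> Ev_derives m k"
| cong_pre: "Ev_derives m n \<Longrightarrow> Ev_derives (Pre a m) (Pre a n)"
| cong_sum: "Ev_derives m1 n1 \<Longrightarrow> Ev_derives m2 n2 \<Longrightarrow> Ev_derives (Sum m1 m2) (Sum n1 n2)"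

end

theory Submission
  imports Defs
begin

section \<open>Structural characterisation of weak traces\<close>

fun acc :: "('a,'x) mon \<Rightarrow> ('a,'x) mon \<Rightarrow> 'a list \<Rightarrow> bool" where
  "acc v Yes s = (v = Yes)"
| "acc v No s = (v = No)"
| "acc v End s = False"
| "acc v (Var x) s = False"
| "acc v (Pre a k) [] = False"
| "acc v (Pre a k) (b # s) = (a = b \<and> acc v k s)"
| "acc v (Sum k1 k2) s = (acc v k1 s \<or> acc v k2 s)"

fun tv :: "('a,'x) mon \<Rightarrow> ('a,'x) mon \<Rightarrow> bool" where
  "tv (Sum k1 k2) v = (tv k1 v \<or> tv k2 v)"
| "tv k v = (is_verdict k \<and> k = v)"

fun ps :: "('a,'x) mon \<Rightarrow> 'a \<Rightarrow> ('a,'x) mon \<Rightarrow> bool" where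
  "ps (Pre b k) a k' = (b = a \<and> k' = k)"
| "ps (Sum k1 k2) a k' = (ps k1 a k' \<or> ps k2 a k')"
| "ps _ a k' = False"

lemma tv_verdict: "tv k v \<Longrightarrow> is_verdict v"
  by (induction k) auto

lemma tv_acc: "tv k v \<Longrightarrow> v = Yes \<or> v = No \<Longrightarrow> acc v k s"
  by (induction k arbitrary: s) auto

lemma step_None_tv: "step k \<alpha> k' \<Longrightarrow> \<alpha> = None \<Longrightarrow> tv k k'"
  by (induction rule: step.induct) (auto elim: is_verdict.elims)

lemma step_Some: "step k \<alpha> k' \<Longrightarrow> \<alpha> = Some a \<Longrightarrow> tv k k' \<or> ps k a k'"
  by (induction rule: step.induct) (auto elim: is_verdict.elims)

lemma tv_step: "tv k v \<Longrightarrow> step k \<alpha> v"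
  by (induction k) (auto intro: step.intros)

lemma ps_step: "ps k a k' \<Longrightarrow> step k (Some a) k'"
  by (induction k) (auto intro: step.intros)

lemma verd_step: "step v \<alpha> k' \<Longrightarrow> is_verdict v \<Longrightarrow> k' = v"
  by (induction rule: step.induct) auto

lemma tv_verd_eq: "tv k v \<Longrightarrow> is_verdict k \<Longrightarrow> v = k"
  by (cases k) auto

lemma tau_star_cases: "tau_star k k' \<Longrightarrow> k' = k \<or> tv k k'"
  unfolding tau_star_def
proof (induction rule: rtranclp_induct)
  case base then show ?case by simp
next
  case (step m m')
  then show ?case
    using step_None_tv[OF step(2)] verd_step[OF step(2)] tv_verdict by blast
qed

lemma ps_acc: "ps k a k' \<Longrightarrow> acc v k' s \<Longrightarrow> acc v k (a # s)"
  by (induction k) auto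

lemma wtrace_verd: "wtrace k s k' \<Longrightarrow> is_verdict k \<Longrightarrow> k' = k"
proof (induction rule: wtrace.induct)
  case (wt_eps m m')
  then show ?case using tau_star_cases tv_verd_eq by blast
next
  case (wt_cons m m1 a m2 m3 s m')
  have "m1 = m" using wt_cons tau_star_cases tv_verd_eq by blast
  then have "m2 = m" using wt_cons verd_step by blast
  then have "m3 = m" using wt_cons tau_star_cases tv_verd_eq by blast
  then show ?case using wt_cons by (cases "s = []") auto
qed

lemma wtrace_acc: "wtrace k s v \<Longrightarrow> v = Yes \<or> v = No \<Longrightarrow> acc v k s"
proof (induction rule: wtrace.induct)
  case (wt_eps m m')
  then show ?case using tau_star_cases tv_acc by (metis acc.simps(1,2))
next
  case (wt_cons m m1 a m2 m3 s m')
  from tau_star_cases[OF wt_cons(1)] show ?case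
  proof
    assume "tv m m1"
    then have vm1: "is_verdict m1" by (rule tv_verdict)
    then have "m2 = m1" using wt_cons verd_step by blast
    then have "m3 = m1" using wt_cons vm1 tau_star_cases tv_verd_eq by blast
    then have "m' = m1" using wt_cons vm1 wtrace_verd by (cases "s = []") auto
    then show ?thesis using \<open>tv m m1\<close> tv_acc wt_cons.prems by blast
  next
    assume "m1 = m"
    from step_Some[OF wt_cons(2)[unfolded \<open>m1 = m\<close>] HOL.refl] show ?thesis
    proof
      assume h: "tv m m2"
      then have vm2: "is_verdict m2" by (rule tv_verdict)
      then have "m3 = m2" using wt_cons vm2 tau_star_cases tv_verd_eq by blast
      then have "m' = m2" using wt_cons vm2 wtrace_verd by (cases "s = []") auto
      then show ?thesis using h tv_acc wt_cons.prems by blast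
    next
      assume h: "ps m a m2"
      have "acc m' m2 s"
      proof (cases "s = []")
        case True
        then have "m' = m3" using wt_cons by blast
        then show ?thesis using tau_star_cases[OF wt_cons(3)] tv_acc wt_cons.prems
          by (metis True acc.simps(1,2))
      next
        case False
        then have ih: "acc m' m3 s" using wt_cons by blast
        from tau_star_cases[OF wt_cons(3)] show ?thesis
        proof
          assume "m3 = m2" then show ?thesis using ih by simp
        next
          assume t: "tv m2 m3"
          then have "m' = m3" using wt_cons False tv_verdict wtrace_verd by blast
          then show ?thesis using t tv_acc wt_cons.prems by blast
        qed
      qed
      then show ?thesis using h by (rule ps_acc[rotated])
    qed
  qed
qed

lemma acc_cases: "acc v k s \<Longrightarrow> v = Yes \<or> v = No \<Longrightarrow>
   tv k v \<or> (\<exists>a s' k'. s = a # s' \<and> ps k a k' \<and> acc v k' s')"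
proof (induction k arbitrary: s)
  case (Pre b k)
  then show ?case by (cases s) auto
next
  case (Sum k1 k2)
  from Sum.prems(1) have "acc v k1 s \<or> acc v k2 s" by simp
  then show ?case
  proof
    assume "acc v k1 s"
    then have "tv k1 v \<or> (\<exists>a s' k'. s = a # s' \<and> ps k1 a k' \<and> acc v k' s')"
      using Sum.IH(1) Sum.prems(2) by blast
    then show ?case by auto
  next
    assume "acc v k2 s"
    then have "tv k2 v \<or> (\<exists>a s' k'. s = a # s' \<and> ps k2 a k' \<and> acc v k' s')"
      using Sum.IH(2) Sum.prems(2) by blast
    then show ?case by auto
  qed
qed auto

lemma step_wtrace: "step k (Some a) k2 \<Longrightarrow> wtrace k2 s v \<Longrightarrow> wtrace k (a # s) v"
proof (cases "s = []")
  case True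
  assume h: "step k (Some a) k2" "wtrace k2 s v"
  then have "tau_star k2 v" using True by (auto elim: wtrace.cases)
  then show ?thesis using h True
    by (intro wt_cons[of k k a k2 v]) (auto simp: tau_star_def)
next
  case False
  assume h: "step k (Some a) k2" "wtrace k2 s v"
  then show ?thesis using False
    by (intro wt_cons[of k k a k2 k2]) (auto simp: tau_star_def)
qed

lemma acc_wtrace: "acc v k s \<Longrightarrow> v = Yes \<or> v = No \<Longrightarrow> wtrace k s v"
proof (induction s arbitrary: k)
  case Nil
  then have "tv k v" using acc_cases by blast
  then have "tau_star k v" unfolding tau_star_def using tv_step by blast
  then show ?case by (rule wt_eps)
next
  case (Cons a s)
  from acc_cases[OF Cons.prems] show ?case
  proof
    assume "tv k v"
    then have "step k (Some a) v" by (rule tv_step)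
    moreover have "acc v v s" using Cons.prems by auto
    then have "wtrace v s v" using Cons.IH Cons.prems(2) by blast
    ultimately show ?thesis by (rule step_wtrace)
  next
    assume "\<exists>a' s' k'. a # s = a' # s' \<and> ps k a' k' \<and> acc v k' s'"
    then obtain k' where k': "ps k a k'" "acc v k' s" by auto
    have "wtrace k' s v" using Cons.IH[OF k'(2) Cons.prems(2)] .
    then show ?thesis using ps_step[OF k'(1)] by (rule step_wtrace[rotated])
  qed
qed

lemma wtrace_iff: "v = Yes \<or> v = No \<Longrightarrow> wtrace k s v \<longleftrightarrow> acc v k s"
  using wtrace_acc[of k s v] acc_wtrace[of v k s] by blast


section \<open>Derivations\<close>

declare Ev_derives.trans[trans]

abbreviation geq :: "('a,'x) mon \<Rightarrow> ('a,'x) mon \<Rightarrow> bool" where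
  "geq m n \<equiv> Ev_derives m (Sum m n)"

lemma geq_refl: "geq m m"
  by (rule Ev_derives.sym, rule A3)

lemma geq_trans: "geq m n \<Longrightarrow> geq n k \<Longrightarrow> geq m k"
proof -
  assume h1: "geq m n" and h2: "geq n k"
  have "Ev_derives m (Sum m n)" by (rule h1)
  also have "Ev_derives (Sum m n) (Sum m (Sum n k))" by (rule cong_sum[OF Ev_derives.refl h2])
  also have "Ev_derives (Sum m (Sum n k)) (Sum (Sum m n) k)" by (rule A2)
  also have "Ev_derives (Sum (Sum m n) k) (Sum m k)"
    by (rule cong_sum[OF Ev_derives.sym[OF h1] Ev_derives.refl])
  finally show ?thesis .
qed

lemma geq_sumL: "geq (Sum m n) m"
proof -
  have "Ev_derives (Sum m n) (Sum (Sum m m) n)" by (rule cong_sum[OF Ev_derives.sym[OF A3] Ev_derives.refl])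
  also have "Ev_derives (Sum (Sum m m) n) (Sum m (Sum m n))" by (rule Ev_derives.sym[OF A2])
  also have "Ev_derives (Sum m (Sum m n)) (Sum (Sum m n) m)" by (rule A1)
  finally show ?thesis .
qed

lemma geq_sumR: "geq (Sum m n) n"
proof -
  have "Ev_derives (Sum m n) (Sum m (Sum n n))" by (rule cong_sum[OF Ev_derives.refl Ev_derives.sym[OF A3]])
  also have "Ev_derives (Sum m (Sum n n)) (Sum (Sum m n) n)" by (rule A2)
  finally show ?thesis .
qed

lemma geq_sum: "geq m n \<Longrightarrow> geq m k \<Longrightarrow> geq m (Sum n k)"
proof -
  assume h1: "geq m n" and h2: "geq m k"
  have "Ev_derives m (Sum m k)" by (rule h2)
  also have "Ev_derives (Sum m k) (Sum (Sum m n) k)"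
    by (rule cong_sum[OF h1 Ev_derives.refl])
  also have "Ev_derives (Sum (Sum m n) k) (Sum m (Sum n k))" by (rule Ev_derives.sym[OF A2])
  finally show ?thesis .
qed

lemma geq_pre: "geq m n \<Longrightarrow> geq (Pre a m) (Pre a n)"
  by (rule Ev_derives.trans[OF cong_pre Da])

lemma geq_antisym: "geq m n \<Longrightarrow> geq n m \<Longrightarrow> Ev_derives m n"
  by (rule Ev_derives.trans, assumption, rule Ev_derives.trans[OF A1 Ev_derives.sym], assumption)

lemma geq_End: "geq m End"
  by (rule Ev_derives.sym, rule A4)

lemma eq_geq: "Ev_derives m n \<Longrightarrow> geq m n"
  by (rule Ev_derives.trans[OF Ev_derives.sym[OF A3] cong_sum[OF Ev_derives.refl]])

definition pre :: "'a list \<Rightarrow> ('a,'x) mon \<Rightarrow> ('a,'x) mon" where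
  "pre s k = foldr Pre s k"

lemma pre_simps[simp]: "pre [] k = k" "pre (a # s) k = Pre a (pre s k)"
  "pre (s @ t) k = pre s (pre t k)"
  by (auto simp: pre_def)

lemma pre_End: "Ev_derives (pre s End) End"
proof (induction s)
  case Nil show ?case by (simp add: Ev_derives.refl)
next
  case (Cons a s) then show ?case by (simp add: Ev_derives.trans[OF cong_pre Ea])
qed

lemma pre_Sum: "Ev_derives (pre s (Sum k1 k2)) (Sum (pre s k1) (pre s k2))"
proof (induction s)
  case Nil show ?case by (simp add: Ev_derives.refl)
next
  case (Cons a s) then show ?case by (simp add: Ev_derives.trans[OF cong_pre Da])
qed

lemma pre_geq: "geq k k' \<Longrightarrow> geq (pre s k) (pre s k')"
  by (induction s) (auto intro: geq_pre)

lemma verd_geq: "v = Yes \<or> v = No \<Longrightarrow> geq v (pre t v)"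
proof (induction t)
  case Nil then show ?case using geq_refl by simp
next
  case (Cons a t)
  have 1: "geq v (Pre a v)" using Cons.prems Ya[of a] Na[of a] by auto
  have 2: "geq (Pre a v) (Pre a (pre t v))" using Cons.IH[OF Cons.prems] by (rule geq_pre)
  show ?case using geq_trans[OF 1 2] by simp
qed

lemma acc_geq: "acc v m s \<Longrightarrow> v = Yes \<or> v = No \<Longrightarrow> geq m (pre s v)"
proof (induction m arbitrary: s)
  case Yes then show ?case using verd_geq by auto
next
  case No then show ?case using verd_geq by auto
next
  case (Pre a m)
  then show ?case by (cases s) (auto intro: geq_pre)
next
  case (Sum m1 m2)
  from Sum.prems(1) have "acc v m1 s \<or> acc v m2 s" by simp
  then show ?case
  proof
    assume "acc v m1 s" then have "geq m1 (pre s v)" using Sum.IH(1) Sum.prems(2) by blast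
    then show ?case by (rule geq_trans[OF geq_sumL])
  next
    assume "acc v m2 s" then have "geq m2 (pre s v)" using Sum.IH(2) Sum.prems(2) by blast
    then show ?case by (rule geq_trans[OF geq_sumR])
  qed
qed auto

lemma both_geq: "acc Yes m s \<Longrightarrow> acc No m s \<Longrightarrow> geq m (pre s k)"
proof -
  assume a: "acc Yes m s" "acc No m s"
  have 1: "geq m (Sum (pre s Yes) (pre s No))"
    by (rule geq_sum[OF acc_geq[OF a(1)] acc_geq[OF a(2)]]) simp_all
  have 2: "geq (Sum (pre s Yes) (pre s No)) (pre s (Sum Yes No))"
    by (rule eq_geq[OF Ev_derives.sym[OF pre_Sum]])
  have 3: "geq (pre s (Sum Yes No)) (pre s k)" by (rule pre_geq[OF O1])
  show ?thesis by (rule geq_trans[OF geq_trans[OF 1 2] 3])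
qed

fun vpath :: "('a,'x) mon \<Rightarrow> 'x \<Rightarrow> 'a list \<Rightarrow> bool" where
  "vpath (Var y) x s = (y = x \<and> s = [])"
| "vpath (Pre a k) x [] = False"
| "vpath (Pre a k) x (b # s) = (a = b \<and> vpath k x s)"
| "vpath (Sum k1 k2) x s = (vpath k1 x s \<or> vpath k2 x s)"
| "vpath _ x s = False"

lemma vpath_geq: "vpath m x s \<Longrightarrow> geq m (pre s (Var x))"
proof (induction m arbitrary: s)
  case (Var y) then show ?case using geq_refl by auto
next
  case (Pre a m)
  then show ?case by (cases s) (auto intro: geq_pre)
next
  case (Sum m1 m2)
  from Sum.prems(1) have "vpath m1 x s \<or> vpath m2 x s" by simp
  then show ?case
  proof
    assume "vpath m1 x s" then have "geq m1 (pre s (Var x))" using Sum.IH(1) by blast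
    then show ?case by (rule geq_trans[OF geq_sumL])
  next
    assume "vpath m2 x s" then have "geq m2 (pre s (Var x))" using Sum.IH(2) by blast
    then show ?case by (rule geq_trans[OF geq_sumR])
  qed
qed auto

lemma main_geq_gen:
  assumes "\<And>s. acc Yes n s \<Longrightarrow> acc Yes m (s0 @ s)"
    and "\<And>s. acc No n s \<Longrightarrow> acc No m (s0 @ s)"
    and "\<And>x s. vpath n x s \<Longrightarrow> vpath m x (s0 @ s) \<or> (acc Yes m (s0 @ s) \<and> acc No m (s0 @ s))"
  shows "geq m (pre s0 n)"
  using assms
proof (induction n arbitrary: s0)
  case End
  show ?case by (rule geq_trans[OF geq_End eq_geq[OF Ev_derives.sym[OF pre_End]]])
next
  case Yes
  have "acc Yes m (s0 @ [])" by (rule Yes.prems(1)) simp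
  then show ?case using acc_geq[of Yes m s0] by simp
next
  case No
  have "acc No m (s0 @ [])" by (rule No.prems(2)) simp
  then show ?case using acc_geq[of No m s0] by simp
next
  case (Var x)
  have "vpath m x (s0 @ []) \<or> (acc Yes m (s0 @ []) \<and> acc No m (s0 @ []))"
    by (rule Var.prems(3)) simp
  then show ?case using vpath_geq[of m x s0] both_geq[of m s0] by auto
next
  case (Pre a n)
  have "geq m (pre (s0 @ [a]) n)"
  proof (rule Pre.IH)
    fix s assume "acc Yes n s"
    then have "acc Yes (Pre a n) (a # s)" by simp
    then show "acc Yes m ((s0 @ [a]) @ s)" using Pre.prems(1) by simp
  next
    fix s assume "acc No n s"
    then have "acc No (Pre a n) (a # s)" by simp
    then show "acc No m ((s0 @ [a]) @ s)" using Pre.prems(2) by simp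
  next
    fix x s assume "vpath n x s"
    then have "vpath (Pre a n) x (a # s)" by simp
    then show "vpath m x ((s0 @ [a]) @ s) \<or> (acc Yes m ((s0 @ [a]) @ s) \<and> acc No m ((s0 @ [a]) @ s))"
      using Pre.prems(3) by simp
  qed
  then show ?case by simp
next
  case (Sum n1 n2)
  have "geq m (pre s0 n1)" by (rule Sum.IH(1)) (use Sum.prems in auto)
  moreover have "geq m (pre s0 n2)" by (rule Sum.IH(2)) (use Sum.prems in auto)
  ultimately have 1: "geq m (Sum (pre s0 n1) (pre s0 n2))" by (rule geq_sum)
  have 2: "geq (Sum (pre s0 n1) (pre s0 n2)) (pre s0 (Sum n1 n2))"
    by (rule eq_geq[OF Ev_derives.sym[OF pre_Sum]])
  show ?case by (rule geq_trans[OF 1 2])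
qed

section \<open>Semantics\<close>

fun acts :: "('a,'x) mon \<Rightarrow> 'a set" where
  "acts (Pre a k) = insert a (acts k)"
| "acts (Sum k1 k2) = acts k1 \<union> acts k2"
| "acts _ = {}"

lemma finite_acts: "finite (acts m)"
  by (induction m) auto

lemma vpath_acts: "vpath m x u \<Longrightarrow> set u \<subseteq> acts m"
proof (induction m arbitrary: u)
  case (Pre a m) then show ?case by (cases u) auto
qed auto

lemma acc_mono: "acc v k u \<Longrightarrow> acc v k (u @ t)"
proof (induction k arbitrary: u)
  case (Pre a m) then show ?case by (cases u) auto
qed auto

lemma acc_fresh: "acc v k (u @ c # t) \<Longrightarrow> c \<notin> acts k \<Longrightarrow> acc v k u"
proof (induction k arbitrary: u)
  case (Pre a m) then show ?case by (cases u) auto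
qed auto

lemma acc_subst_D: "acc v (subst \<sigma> m) s \<Longrightarrow>
   acc v m s \<or> (\<exists>x u t. s = u @ t \<and> vpath m x u \<and> acc v (\<sigma> x) t)"
proof (induction m arbitrary: s)
  case (Var x)
  then show ?case by (intro disjI2 exI[of _ x] exI[of _ "[]"] exI[of _ s]) simp
next
  case (Pre a m)
  then show ?case
  proof (cases s)
    case (Cons b s')
    with Pre.prems have ab: "a = b" and h: "acc v (subst \<sigma> m) s'" by auto
    from Pre.IH[OF h] show ?thesis
    proof
      assume "acc v m s'" then show ?thesis using ab Cons by simp
    next
      assume "\<exists>x u t. s' = u @ t \<and> vpath m x u \<and> acc v (\<sigma> x) t"
      then obtain x u t where "s' = u @ t" "vpath m x u" "acc v (\<sigma> x) t" by blast
      then have "s = (a # u) @ t \<and> vpath (Pre a m) x (a # u) \<and> acc v (\<sigma> x) t" using ab Cons by simp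
      then show ?thesis by blast
    qed
  qed simp
next
  case (Sum m1 m2)
  from Sum.prems have "acc v (subst \<sigma> m1) s \<or> acc v (subst \<sigma> m2) s" by simp
  then show ?case
  proof
    assume "acc v (subst \<sigma> m1) s"
    from Sum.IH(1)[OF this] show ?case by auto
  next
    assume "acc v (subst \<sigma> m2) s"
    from Sum.IH(2)[OF this] show ?case by auto
  qed
qed auto

lemma acc_subst_I1: "acc v m s \<Longrightarrow> acc v (subst \<sigma> m) s"
proof (induction m arbitrary: s)
  case (Pre a m) then show ?case by (cases s) auto
qed auto

lemma acc_subst_I2: "vpath m x u \<Longrightarrow> acc v (\<sigma> x) t \<Longrightarrow> acc v (subst \<sigma> m) (u @ t)"
proof (induction m arbitrary: u)
  case (Pre a m) then show ?case by (cases u) auto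
qed auto

lemma omega_pref: "w \<in> omega_ext L \<longleftrightarrow> (\<exists>j. map w [0..<j] \<in> L)"
proof
  assume "w \<in> omega_ext L"
  then obtain s w' where s: "s \<in> L" and w: "w = (\<lambda>i. if i < length s then s ! i else w' (i - length s))"
    unfolding omega_ext_def by blast
  have "map w [0..<length s] = s" by (rule nth_equalityI) (auto simp: w)
  then show "\<exists>j. map w [0..<j] \<in> L" using s by metis
next
  assume "\<exists>j. map w [0..<j] \<in> L"
  then obtain j where j: "map w [0..<j] \<in> L" by blast
  show "w \<in> omega_ext L" unfolding omega_ext_def
    apply (rule CollectI, rule bexI[OF _ j], rule exI[of _ "\<lambda>i. w (i + j)"])
    by (rule ext) auto
qed

definition word :: "'a list \<Rightarrow> 'a \<Rightarrow> nat \<Rightarrow> 'a" where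
  "word s c = (\<lambda>i. if i < length s then s ! i else c)"

lemma word_pref1: "j \<le> length s \<Longrightarrow> map (word s c) [0..<j] = take j s"
  by (rule nth_equalityI) (auto simp: word_def)

lemma word_pref2: "length s < j \<Longrightarrow> map (word s c) [0..<j] = s @ c # replicate (j - length s - 1) c"
  by (rule nth_equalityI) (auto simp: word_def nth_append nth_Cons split: nat.splits)

lemma word_pref_len: "map (word s c) [0..<length s] = s"
  using word_pref1[of "length s" s c] by simp

lemma word_pref_suc: "map (word s c) [0..<Suc (length s)] = s @ [c]"
  using word_pref2[of s "Suc (length s)" c] by simp

lemma KL1: "c \<notin> acts k \<Longrightarrow> acc v k (map (word s c) [0..<j]) \<Longrightarrow> acc v k s"
proof (cases "j \<le> length s")
  case True
  assume "acc v k (map (word s c) [0..<j])"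
  then have "acc v k (take j s @ drop j s)" using True word_pref1 acc_mono by metis
  then show ?thesis by simp
next
  case False
  assume "c \<notin> acts k" "acc v k (map (word s c) [0..<j])"
  then show ?thesis using False word_pref2 acc_fresh by (metis not_le)
qed

lemma omega_acc:
  assumes "omega_eq m n" "\<forall>x. closed (\<sigma> x)" "v = Yes \<or> v = No"
  shows "omega_ext {s. acc v (subst \<sigma> m) s} = omega_ext {s. acc v (subst \<sigma> n) s}"
proof -
  have "omega_eq_closed (subst \<sigma> m) (subst \<sigma> n)" using assms unfolding omega_eq_def by blast
  then show ?thesis using assms(3) unfolding omega_eq_closed_def La_def Lr_def
    using wtrace_iff[of v] by auto
qed

lemma partA:
  fixes m n :: "('a,'x) mon"
  assumes "omega_eq m n" "c \<notin> acts m" "v = Yes \<or> v = No" "acc v n s"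
  shows "acc v m s"
proof -
  define \<sigma> where "\<sigma> = (\<lambda>_::'x. End :: ('a,'x) mon)"
  have cl: "\<forall>x. closed (\<sigma> x)" by (simp add: \<sigma>_def closed_def)
  have "acc v (subst \<sigma> n) (map (word s c) [0..<length s])"
    using assms(4) acc_subst_I1 word_pref_len by metis
  then have "word s c \<in> omega_ext {s. acc v (subst \<sigma> n) s}" using omega_pref by blast
  then have "word s c \<in> omega_ext {s. acc v (subst \<sigma> m) s}" using omega_acc[OF assms(1) cl assms(3)] by simp
  then obtain j where "acc v (subst \<sigma> m) (map (word s c) [0..<j])" using omega_pref by blast
  then have "acc v m (map (word s c) [0..<j])" using acc_subst_D by (fastforce simp: \<sigma>_def)
  then show ?thesis by (rule KL1[OF assms(2)])
qed

lemma list_lemma: "c \<notin> set u \<Longrightarrow> c \<notin> set s \<Longrightarrow> s @ c # r = u @ c # t \<Longrightarrow> u = s"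
proof (induction u arbitrary: s)
  case Nil then show ?case by (cases s) auto
next
  case (Cons a u) then show ?case by (cases s) auto
qed

lemma partC:
  fixes m n :: "('a,'x) mon"
  assumes "omega_eq m n" "c \<notin> acts m" "c \<notin> acts n" "v = Yes \<or> v = No"
    "vpath n x s" "\<not> acc v m s"
  shows "vpath m x s"
proof -
  define \<sigma> where "\<sigma> = (\<lambda>y::'x. if y = x then Pre c v else End :: ('a,'x) mon)"
  have cl: "\<forall>x. closed (\<sigma> x)" using assms(4) by (auto simp: \<sigma>_def closed_def)
  have cs: "c \<notin> set s" using vpath_acts[OF assms(5)] assms(3) by blast
  have "acc v (\<sigma> x) [c]" using assms(4) by (auto simp: \<sigma>_def)
  then have "acc v (subst \<sigma> n) (map (word s c) [0..<Suc (length s)])"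
    using acc_subst_I2[OF assms(5)] word_pref_suc by metis
  then have "word s c \<in> omega_ext {s. acc v (subst \<sigma> n) s}" using omega_pref by blast
  then have "word s c \<in> omega_ext {s. acc v (subst \<sigma> m) s}" using omega_acc[OF assms(1) cl assms(4)] by simp
  then obtain j where j: "acc v (subst \<sigma> m) (map (word s c) [0..<j])" using omega_pref by blast
  from acc_subst_D[OF j] show ?thesis
  proof
    assume "acc v m (map (word s c) [0..<j])"
    then have "acc v m s" by (rule KL1[OF assms(2)])
    then show ?thesis using assms(6) by simp
  next
    assume "\<exists>y u t. map (word s c) [0..<j] = u @ t \<and> vpath m y u \<and> acc v (\<sigma> y) t"
    then obtain y u t where h: "map (word s c) [0..<j] = u @ t" "vpath m y u" "acc v (\<sigma> y) t" by blast
    have "y = x" using h(3) by (auto simp: \<sigma>_def split: if_splits)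
    then obtain t' where t: "t = c # t'" using h(3) by (cases t) (auto simp: \<sigma>_def)
    have cu: "c \<notin> set u" using vpath_acts[OF h(2)] assms(2) by blast
    show ?thesis
    proof (cases "j \<le> length s")
      case True
      then have "take j s = u @ c # t'" using h(1) t word_pref1 by metis
      then have "c \<in> set s" by (metis in_set_takeD in_set_conv_decomp)
      then show ?thesis using cs by blast
    next
      case False
      then have "s @ c # replicate (j - length s - 1) c = u @ c # t'" using h(1) t word_pref2 by (metis not_le)
      then have "u = s" using list_lemma cu cs by metis
      then show ?thesis using h(2) \<open>y = x\<close> by simp
    qed
  qed
qed

theorem mainTheorem10:
  fixes m n :: "('a, 'x) mon"
  assumes "infinite (UNIV :: 'a set)"
    and "omega_eq m n"
  shows "Ev_derives m n"
proof -
  obtain c where c: "c \<notin> acts m \<union> acts n"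
    using ex_new_if_finite[OF assms(1)] finite_acts by (metis finite_Un)
  have sym: "omega_eq n m" using assms(2) unfolding omega_eq_def omega_eq_closed_def by metis
  have dir: "geq m' n'" if om: "omega_eq m' n'" and cm: "c \<notin> acts m'" and cn: "c \<notin> acts n'"
    for m' n' :: "('a,'x) mon"
  proof -
    have "geq m' (pre [] n')"
    proof (rule main_geq_gen)
      fix s assume h: "acc Yes n' s" then show "acc Yes m' ([] @ s)" using partA[OF om cm _ h] by simp
    next
      fix s assume h: "acc No n' s" then show "acc No m' ([] @ s)" using partA[OF om cm _ h] by simp
    next
      fix x s assume "vpath n' x s"
      then show "vpath m' x ([] @ s) \<or> acc Yes m' ([] @ s) \<and> acc No m' ([] @ s)"
        using partC[OF om cm cn _ \<open>vpath n' x s\<close>, of Yes] partC[OF om cm cn _ \<open>vpath n' x s\<close>, of No] by auto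
    qed
    then show ?thesis by simp
  qed
  show ?thesis
    by (rule geq_antisym) (use dir assms(2) sym c in auto)
qed

end
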